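(* Let $X$ be a Banach space which is isomorphic to its hyperplanes (closed subspaces of codimension one), and let $T$ be a Fredholm operator on $X$. Then the identity operator on $X$ factors through $T$, i.e. there are bounded operators $R,S$ on $X$ with $I_X=STR$. *)

theory Defs
  imports "HOL-Analysis.Analysis"
begin

definition closed_hyperplane :: "'a::real_normed_vector set \<Rightarrow> bool" where
  "closed_hyperplane H \<longleftrightarrow> subspace H \<and> closed H \<and> H \<noteq> UNIV \<and>
     (\<exists>v. span (insert v H) = UNIV)"

text \<open>X is isomorphic (as a normed space) to the subspace H: a bounded linear
  bijection of X onto H with bounded inverse
  (the inverse H \<rightarrow> X is bounded iff norm x \<le> K * norm (f x)).\<close>
definition isomorphic_to_subspace :: "'a::real_normed_vector set \<Rightarrow> bool" where
  "isomorphic_to_subspace H \<longleftrightarrow> (\<exists>f::'a \<Rightarrow> 'a. bounded_linear f \<and> inj f \<and> range f = H \<and>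
     (\<exists>K. \<forall>x. norm x \<le> K * norm (f x)))"

definition iso_to_hyperplanes :: "'a::real_normed_vector itself \<Rightarrow> bool" where
  "iso_to_hyperplanes _ \<longleftrightarrow> (\<forall>H::'a set. closed_hyperplane H \<longrightarrow> isomorphic_to_subspace H)"

definition fredholm :: "('a::real_normed_vector \<Rightarrow> 'a) \<Rightarrow> bool" where
  "fredholm T \<longleftrightarrow> bounded_linear T \<and>
     (\<exists>B. finite B \<and> span B = {x. T x = 0}) \<and>
     closed (range T) \<and>
     (\<exists>C. finite C \<and> span (range T \<union> C) = UNIV)"

end

theory Submission
  imports Defs
begin


lemma hb_sep:
  fixes Y :: "'a::real_normed_vector set"
  assumes Ysub: "subspace Y" and Ycl: "closed Y" and cY: "c \<notin> Y"
  shows "\<exists>\<phi>::'a \<Rightarrow> real. bounded_linear \<phi> \<and> (\<forall>y\<in>Y. \<phi> y = 0) \<and> \<phi> c = 1"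
proof -
  obtain d where d0: "d > 0" and dd: "\<And>y. y \<in> Y \<Longrightarrow> d \<le> norm (c - y)"
  proof -
    have "open (- Y)" using Ycl by (simp add: open_Compl)
    then obtain e where "e > 0" "ball c e \<subseteq> - Y" using cY open_contains_ball by blast
    then have "\<And>y. y \<in> Y \<Longrightarrow> e \<le> norm (c - y)"
      by (force simp: dist_norm subset_iff)
    with \<open>e > 0\<close> show ?thesis using that by blast
  qed
  define M where "M = 1 / d"
  have M0: "M \<ge> 0" using d0 by (simp add: M_def)
  define p where "p x = M * norm x" for x :: 'a
  have p_add: "p (x + y) \<le> p x + p y" for x y
    unfolding p_def using M0 norm_triangle_ineq[of x y]
    by (metis distrib_left mult_left_mono)
  have p_scale: "p (t *\<^sub>R x) = t * p x" if "t \<ge> 0" for t x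
    unfolding p_def using that by simp
  define F0 where "F0 = {(y + t *\<^sub>R c, t) | y t. y \<in> Y}"
  define A where "A = {F :: ('a \<times> real) set. subspace F \<and> F0 \<subseteq> F \<and>
     (\<forall>a. (0,a) \<in> F \<longrightarrow> a = 0) \<and> (\<forall>x a. (x,a) \<in> F \<longrightarrow> a \<le> p x)}"
  have F0A: "F0 \<in> A"
  proof -
    have "subspace F0"
      unfolding subspace_def
    proof (intro conjI ballI allI)
      show "0 \<in> F0" unfolding F0_def
        by (rule CollectI, rule exI[of _ 0], rule exI[of _ 0]) (simp add: subspace_0[OF Ysub] zero_prod_def)
    next
      fix u v assume "u \<in> F0" "v \<in> F0"
      then obtain y1 t1 y2 t2 where "u = (y1 + t1 *\<^sub>R c, t1)" "v = (y2 + t2 *\<^sub>R c, t2)" "y1 \<in> Y" "y2 \<in> Y"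
        unfolding F0_def by blast
      then show "u + v \<in> F0" unfolding F0_def
        by (intro CollectI exI[of _ "y1 + y2"] exI[of _ "t1 + t2"])
           (simp add: subspace_add[OF Ysub] algebra_simps)
    next
      fix r u assume "u \<in> F0"
      then obtain y1 t1 where "u = (y1 + t1 *\<^sub>R c, t1)" "y1 \<in> Y"
        unfolding F0_def by blast
      then show "r *\<^sub>R u \<in> F0" unfolding F0_def
        by (intro CollectI exI[of _ "r *\<^sub>R y1"] exI[of _ "r * t1"])
           (simp add: subspace_scale[OF Ysub] algebra_simps)
    qed
    moreover have "a = 0" if "(0,a) \<in> F0" for a
    proof (rule ccontr)
      assume a0: "a \<noteq> 0"
      from that obtain y where y: "y \<in> Y" "0 = y + a *\<^sub>R c" unfolding F0_def by blast
      then have "c = (- 1 / a) *\<^sub>R y" using a0 by (simp add: eq_neg_iff_add_eq_0[symmetric] field_simps)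
      then have "c \<in> Y" using subspace_scale[OF Ysub y(1)] by (simp add: scaleR_minus_left[symmetric] del: scaleR_minus_left)
      with cY show False by simp
    qed
    moreover have "a \<le> p x" if "(x,a) \<in> F0" for x a
    proof -
      from that obtain y where y: "y \<in> Y" "x = y + a *\<^sub>R c" unfolding F0_def by blast
      show ?thesis
      proof (cases "a = 0")
        case True then show ?thesis using M0 by (simp add: p_def)
      next
        case False
        have "(- (1/a)) *\<^sub>R y \<in> Y" using subspace_scale[OF Ysub y(1)] .
        then have "d \<le> norm (c - (- (1/a)) *\<^sub>R y)" by (rule dd)
        also have "c - (- (1/a)) *\<^sub>R y = (1/a) *\<^sub>R x" using False y(2) by (simp add: algebra_simps)
        finally have "d \<le> norm x / \<bar>a\<bar>" by simp
        then have "d * \<bar>a\<bar> \<le> norm x" using False by (simp add: field_simps)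
        then have "\<bar>a\<bar> \<le> M * norm x" using d0 by (simp add: M_def field_simps)
        then show ?thesis by (simp add: p_def)
      qed
    qed
    ultimately show ?thesis unfolding A_def by blast
  qed
  have "\<exists>U\<in>A. \<forall>X\<in>C. X \<subseteq> U" if C: "C \<in> chains A" for C
  proof (cases "C = {}")
    case True then show ?thesis using F0A by blast
  next
    case False
    have CA: "C \<subseteq> A" and ch: "\<And>X Z. X \<in> C \<Longrightarrow> Z \<in> C \<Longrightarrow> X \<subseteq> Z \<or> Z \<subseteq> X"
      using C unfolding chains_def chain_subset_def by blast+
    have "\<Union>C \<in> A" unfolding A_def
    proof (intro CollectI conjI allI impI)
      show "subspace (\<Union>C)" unfolding subspace_def
      proof (intro conjI ballI allI)
        obtain X where "X \<in> C" using False by blast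
        then show "0 \<in> \<Union>C" using CA unfolding A_def by (auto intro: subspace_0)
      next
        fix u v assume "u \<in> \<Union>C" "v \<in> \<Union>C"
        then obtain X Z where XZ: "X \<in> C" "Z \<in> C" "u \<in> X" "v \<in> Z" by blast
        then have "u \<in> X \<union> Z" "v \<in> X \<union> Z" by auto
        from ch[OF XZ(1,2)] show "u + v \<in> \<Union>C"
        proof
          assume "X \<subseteq> Z" then show ?thesis using XZ CA unfolding A_def
            by (auto intro!: UnionI[of Z] subspace_add)
        next
          assume "Z \<subseteq> X" then show ?thesis using XZ CA unfolding A_def
            by (auto intro!: UnionI[of X] subspace_add)
        qed
      next
        fix r u assume "u \<in> \<Union>C"
        then obtain X where "X \<in> C" "u \<in> X" by blast
        then show "r *\<^sub>R u \<in> \<Union>C" using CA unfolding A_def by (auto intro!: UnionI[of X] subspace_scale)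
      qed
    next
      obtain X where "X \<in> C" using False by blast
      then show "F0 \<subseteq> \<Union>C" using CA unfolding A_def by blast
    next
      fix a assume "(0,a) \<in> \<Union>C" then show "a = 0" using CA unfolding A_def by blast
    next
      fix x a assume "(x,a) \<in> \<Union>C" then show "a \<le> p x" using CA unfolding A_def by blast
    qed
    then show ?thesis by blast
  qed
  then have zc: "\<forall>C\<in>chains A. \<exists>U\<in>A. \<forall>X\<in>C. X \<subseteq> U" by (intro ballI)
  obtain Fm where FmA: "Fm \<in> A" and Fmax0: "\<forall>X\<in>A. Fm \<subseteq> X \<longrightarrow> X = Fm"
    using Zorn_Lemma2[OF zc] by (elim bexE)
  have Fmax: "X = Fm" if "X \<in> A" "Fm \<subseteq> X" for X using Fmax0 that by simp
  have Fsub: "subspace Fm" using FmA by (simp add: A_def)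
  have F0F: "F0 \<subseteq> Fm" using FmA by (simp add: A_def)
  have Fz: "\<And>a. (0,a) \<in> Fm \<Longrightarrow> a = 0" using FmA by (simp add: A_def)
  have Fb: "\<And>x a. (x,a) \<in> Fm \<Longrightarrow> a \<le> p x" using FmA by (simp add: A_def)
  have Fsc: "(r *\<^sub>R x, r * a) \<in> Fm" if "(x,a) \<in> Fm" for r x a
    using subspace_scale[OF Fsub that, of r] by simp
  have Fadd: "(x + y, a + b) \<in> Fm" if "(x,a) \<in> Fm" "(y,b) \<in> Fm" for x y a b
    using subspace_add[OF Fsub that] by simp
  have F00: "(0,0) \<in> Fm" using subspace_0[OF Fsub] by (simp add: zero_prod_def)
  have dom: "\<exists>a. (x0,a) \<in> Fm" for x0
  proof (rule ccontr)
    assume nx0: "\<nexists>a. (x0, a) \<in> Fm"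
    define L where "L = {b - p (y - x0) | y b. (y,b) \<in> Fm}"
    define \<alpha> where "\<alpha> = Sup L"
    have key: "b - p (y - x0) \<le> p (z + x0) - b'" if "(y,b) \<in> Fm" "(z,b') \<in> Fm" for y b z b'
    proof -
      have "b + b' \<le> p (y + z)" using Fb[OF Fadd[OF that]] .
      also have "\<dots> \<le> p (y - x0) + p (z + x0)" using p_add[of "y - x0" "z + x0"] by simp
      finally show ?thesis by simp
    qed
    have Lne: "L \<noteq> {}" using F00 unfolding L_def by blast
    have Lbdd: "bdd_above L" unfolding L_def bdd_above_def
      using key[OF _ F00] by auto
    have up: "b - p (y - x0) \<le> \<alpha>" if "(y,b) \<in> Fm" for y b
      unfolding \<alpha>_def by (rule cSup_upper[OF _ Lbdd]) (use that L_def in blast)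
    have lo: "\<alpha> \<le> p (z + x0) - b'" if "(z,b') \<in> Fm" for z b'
      unfolding \<alpha>_def by (rule cSup_least[OF Lne]) (use key[OF _ that] L_def in blast)
    define F' where "F' = {(x + t *\<^sub>R x0, a + t * \<alpha>) | x a t. (x,a) \<in> Fm}"
    have memF': "(x + t *\<^sub>R x0, a + t * \<alpha>) \<in> F'" if "(x,a) \<in> Fm" for x a t
      unfolding F'_def using that by blast
    have FF': "Fm \<subseteq> F'"
    proof
      fix u assume "u \<in> Fm"
      then show "u \<in> F'" using memF'[of "fst u" "snd u" 0] by simp
    qed
    have "F' \<in> A" unfolding A_def
    proof (intro CollectI conjI allI impI)
      show "subspace F'" unfolding subspace_def
      proof (intro conjI ballI allI)
        show "0 \<in> F'" using FF' F00 by (auto simp: zero_prod_def)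
      next
        fix u v assume "u \<in> F'" "v \<in> F'"
        then obtain x1 a1 t1 x2 a2 t2 where "u = (x1 + t1 *\<^sub>R x0, a1 + t1 * \<alpha>)" "v = (x2 + t2 *\<^sub>R x0, a2 + t2 * \<alpha>)"
          "(x1,a1) \<in> Fm" "(x2,a2) \<in> Fm"
          unfolding F'_def by blast
        then have "u + v = ((x1 + x2) + (t1 + t2) *\<^sub>R x0, (a1 + a2) + (t1 + t2) * \<alpha>)"
          by (simp add: algebra_simps)
        then show "u + v \<in> F'" using memF'[OF Fadd[OF \<open>(x1,a1) \<in> Fm\<close> \<open>(x2,a2) \<in> Fm\<close>]] by simp
      next
        fix r u assume "u \<in> F'"
        then obtain x1 a1 t1 where "u = (x1 + t1 *\<^sub>R x0, a1 + t1 * \<alpha>)" "(x1,a1) \<in> Fm"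
          unfolding F'_def by blast
        then have "r *\<^sub>R u = (r *\<^sub>R x1 + (r * t1) *\<^sub>R x0, r * a1 + (r * t1) * \<alpha>)"
          by (simp add: algebra_simps)
        then show "r *\<^sub>R u \<in> F'" using memF'[OF Fsc[OF \<open>(x1,a1) \<in> Fm\<close>]] by simp
      qed
    next
      show "F0 \<subseteq> F'" using F0F FF' by blast
    next
      fix a' assume "(0,a') \<in> F'"
      then obtain x a t where xa: "(x,a) \<in> Fm" "0 = x + t *\<^sub>R x0" "a' = a + t * \<alpha>"
        unfolding F'_def by blast
      show "a' = 0"
      proof (cases "t = 0")
        case True
        then have "x = 0" using xa by simp
        then show ?thesis using Fz xa True by simp
      next
        case False
        have e: "x + t *\<^sub>R x0 = 0" using xa(2) by simp
        then have e2: "t *\<^sub>R x0 = - x" by (simp add: add_eq_0_iff)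
        have "x0 = (1/t) *\<^sub>R (t *\<^sub>R x0)" using False by simp
        also have "\<dots> = (- (1/t)) *\<^sub>R x" using e2 by simp
        finally have "(x0, (- (1/t)) * a) \<in> Fm" using Fsc[OF xa(1), of "- (1/t)"] by simp
        with nx0 show ?thesis by blast
      qed
    next
      fix x' a' assume "(x',a') \<in> F'"
      then obtain x a t where xa: "(x,a) \<in> Fm" "x' = x + t *\<^sub>R x0" "a' = a + t * \<alpha>"
        unfolding F'_def by blast
      show "a' \<le> p x'"
      proof (cases t "0::real" rule: linorder_cases)
        case equal then show ?thesis using Fb[OF xa(1)] xa by simp
      next
        case greater
        have "\<alpha> \<le> p ((1/t) *\<^sub>R x + x0) - (1/t) * a" using lo[OF Fsc[OF xa(1)]] .
        then have "t * \<alpha> \<le> t * p ((1/t) *\<^sub>R x + x0) - a" using greater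
          by (simp add: field_simps)
        also have "t * p ((1/t) *\<^sub>R x + x0) = p (t *\<^sub>R ((1/t) *\<^sub>R x + x0))"
          using p_scale greater by simp
        also have "t *\<^sub>R ((1/t) *\<^sub>R x + x0) = x'" using greater xa(2) by (simp add: algebra_simps)
        finally show ?thesis using xa by simp
      next
        case less
        define s where "s = - t"
        have s0: "s > 0" using less s_def by simp
        have "(1/s) * a - p ((1/s) *\<^sub>R x - x0) \<le> \<alpha>" using up[OF Fsc[OF xa(1)]] .
        then have "a - s * p ((1/s) *\<^sub>R x - x0) \<le> s * \<alpha>" using s0
          by (simp add: field_simps)
        also have "s * p ((1/s) *\<^sub>R x - x0) = p (s *\<^sub>R ((1/s) *\<^sub>R x - x0))"
          using p_scale s0 by simp
        also have "s *\<^sub>R ((1/s) *\<^sub>R x - x0) = x'" using s0 xa(2) by (simp add: algebra_simps s_def)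
        finally show ?thesis using xa s_def by simp
      qed
    qed
    then have "F' = Fm" using Fmax FF' by blast
    moreover have "(x0, \<alpha>) \<in> F'" using memF'[OF F00, of 1] by simp
    ultimately show False using nx0 by blast
  qed
  define \<phi> where "\<phi> x = (SOME a. (x,a) \<in> Fm)" for x
  have uniq: "a = b" if "(x,a) \<in> Fm" "(x,b) \<in> Fm" for x a b
  proof -
    have "(x + (-1) *\<^sub>R x, a + (-1) * b) \<in> Fm" using Fadd[OF that(1) Fsc[OF that(2)]] .
    then have "(0, a - b) \<in> Fm" by simp
    then have "a - b = 0" by (rule Fz)
    then show ?thesis by simp
  qed
  have phiF: "(x, \<phi> x) \<in> Fm" for x unfolding \<phi>_def using dom[of x] by (metis someI_ex)
  have phi_eq: "\<phi> x = a" if "(x,a) \<in> Fm" for x a using uniq[OF phiF that] .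
  have bl: "bounded_linear \<phi>"
  proof (rule bounded_linear_intro[where K = M])
    show "\<phi> (x + y) = \<phi> x + \<phi> y" for x y by (rule phi_eq[OF Fadd[OF phiF phiF]])
    show "\<phi> (r *\<^sub>R x) = r *\<^sub>R \<phi> x" for r x using phi_eq[OF Fsc[OF phiF]] by simp
    show "norm (\<phi> x) \<le> norm x * M" for x
    proof -
      have "\<phi> x \<le> p x" by (rule Fb[OF phiF])
      moreover have "\<phi> (-x) = - \<phi> x" using phi_eq[OF Fsc[OF phiF, of "-1" x]] by simp
      moreover have "\<phi> (-x) \<le> p (-x)" by (rule Fb[OF phiF])
      ultimately have "\<bar>\<phi> x\<bar> \<le> M * norm x" by (simp add: p_def abs_le_iff)
      then show ?thesis by (simp add: mult.commute)
    qed
  qed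
  have "\<phi> y = 0" if "y \<in> Y" for y
  proof -
    have "(y + 0 *\<^sub>R c, 0) \<in> F0" unfolding F0_def using that by blast
    then have "(y, 0) \<in> Fm" using F0F by auto
    then show ?thesis by (rule phi_eq)
  qed
  moreover have "\<phi> c = 1"
  proof -
    have "(0 + 1 *\<^sub>R c, 1) \<in> F0" unfolding F0_def using subspace_0[OF Ysub] by blast
    then have "(c, 1) \<in> Fm" using F0F by auto
    then show ?thesis by (rule phi_eq)
  qed
  ultimately have "bounded_linear \<phi> \<and> (\<forall>y\<in>Y. \<phi> y = 0) \<and> \<phi> c = 1" using bl by blast
  then show ?thesis by auto
qed


lemma baire_step:
  fixes T :: "'a::banach \<Rightarrow> 'b::banach"
  assumes T: "bounded_linear T" and surj: "surj T"
  shows "\<exists>n::nat. \<exists>y e. e > 0 \<and> ball y e \<subseteq> closure (T ` ball 0 (real n))"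
proof (rule ccontr)
  assume H: "\<not> ?thesis"
  define G where "G = range (\<lambda>n::nat. closure (T ` ball 0 (real n)))"
  have "euclidean interior_of \<Union>G = {}"
  proof (rule Baire_category_alt)
    show "completely_metrizable_space (euclidean::'b topology) \<or> locally_compact_space (euclidean::'b topology) \<and> regular_space (euclidean::'b topology)"
      using completely_metrizable_space_euclidean by blast
    show "countable G" unfolding G_def by simp
    fix S assume "S \<in> G"
    then obtain n where S: "S = closure (T ` ball 0 (real n))" unfolding G_def by blast
    show "closedin euclidean S \<and> euclidean interior_of S = {}"
    proof
      show "closedin euclidean S" using S closed_closedin by blast
      show "euclidean interior_of S = {}"
      proof (rule ccontr)
        assume "euclidean interior_of S \<noteq> {}"
        then obtain x U where "openin euclidean U" "x \<in> U" "U \<subseteq> S"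
          unfolding interior_of_def by blast
        then obtain e where "e > 0" "ball x e \<subseteq> U"
          using open_contains_ball open_openin by metis
        then show False using H S \<open>U \<subseteq> S\<close> by blast
      qed
    qed
  qed
  moreover have "\<Union>G = UNIV"
  proof -
    have "z \<in> \<Union>G" for z
    proof -
      obtain x where x: "z = T x" using surj by (metis surjD)
      obtain n :: nat where "norm x < real n" using reals_Archimedean2 by blast
      then have "z \<in> closure (T ` ball 0 (real n))" using x closure_subset by fastforce
      then show ?thesis unfolding G_def by blast
    qed
    then show ?thesis by blast
  qed
  ultimately show False using interior_of_topspace[of "euclidean::'b topology"] by simp
qed

lemma approx_step:
  fixes T :: "'a::banach \<Rightarrow> 'b::banach"
  assumes T: "bounded_linear T" and surj: "surj T"
  shows "\<exists>c>0. \<forall>z \<delta>. \<delta> > 0 \<longrightarrow> (\<exists>x. norm x \<le> c * norm z \<and> norm (T x - z) < \<delta>)"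
proof -
  interpret T: bounded_linear T by fact
  obtain n :: nat and y e where e: "e > 0" and sub: "ball y e \<subseteq> closure (T ` ball 0 (real n))"
    using baire_step[OF T surj] by blast
  have n0: "n > 0"
  proof (rule ccontr)
    assume "\<not> n > 0" then have "n = 0" by simp
    then have "ball y e \<subseteq> {}" using sub by simp
    then show False using e centre_in_ball[of y e] by blast
  qed
  define r where "r = e / (2 * real n)"
  have r0: "r > 0" using e n0 by (simp add: r_def)
  have A: "\<exists>x. norm x < 1 \<and> norm (T x - z) < \<delta>" if z: "norm z < r" and d: "\<delta> > 0" for z \<delta>
  proof -
    define w where "w = (2 * real n) *\<^sub>R z"
    have "norm w < e" using z n0 by (simp add: w_def r_def field_simps)
    then have "y + w \<in> closure (T ` ball 0 (real n))" "y \<in> closure (T ` ball 0 (real n))"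
      using sub e by (auto simp: dist_norm subset_iff)
    then obtain a b where a: "a \<in> T ` ball 0 (real n)" "dist a (y + w) < \<delta> * real n"
      and b: "b \<in> T ` ball 0 (real n)" "dist b y < \<delta> * real n"
      using d n0 unfolding closure_approachable by (meson mult_pos_pos of_nat_0_less_iff)
    obtain x1 x2 where x12: "a = T x1" "b = T x2" "norm x1 < real n" "norm x2 < real n"
      using a(1) b(1) by auto
    define x where "x = (1 / (2 * real n)) *\<^sub>R (x1 - x2)"
    have "norm (x1 - x2) < 2 * real n"
      using x12 norm_triangle_ineq4[of x1 x2] by linarith
    moreover have "norm x = norm (x1 - x2) / (2 * real n)" using n0 by (simp add: x_def)
    ultimately have "norm x < 1" using n0 by (simp add: pos_divide_less_eq)
    moreover have "T x - z = (1 / (2 * real n)) *\<^sub>R ((a - (y + w)) - (b - y))"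
      using n0 by (simp add: x_def x12 T.scaleR T.diff w_def algebra_simps)
    moreover have "norm ((a - (y + w)) - (b - y)) < 2 * (\<delta> * real n)"
      using a(2) b(2) norm_triangle_ineq4[of "a - (y + w)" "b - y"] by (simp add: dist_norm)
    ultimately have "norm (T x - z) = norm ((a - (y + w)) - (b - y)) / (2 * real n)"
      and "norm ((a - (y + w)) - (b - y)) < 2 * (\<delta> * real n)" and "norm x < 1" using n0 by simp_all
    moreover have "2 * (\<delta> * real n) / (2 * real n) = \<delta>" using n0 by simp
    ultimately have "norm (T x - z) < \<delta>" using n0
      by (metis divide_strict_right_mono of_nat_0_less_iff zero_less_mult_iff zero_less_numeral)
    with \<open>norm x < 1\<close> show ?thesis by blast
  qed
  define c where "c = 2 / r"
  have c0: "c > 0" using r0 by (simp add: c_def)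
  have "\<exists>x. norm x \<le> c * norm z \<and> norm (T x - z) < \<delta>" if d: "\<delta> > 0" for z \<delta>
  proof (cases "z = 0")
    case True then show ?thesis using d by (intro exI[of _ 0]) simp
  next
    case False
    define s where "s = r / (2 * norm z)"
    have s0: "s > 0" using False r0 by (simp add: s_def)
    have "norm (s *\<^sub>R z) < r" using False r0 by (simp add: s_def)
    then obtain x' where x': "norm x' < 1" "norm (T x' - s *\<^sub>R z) < \<delta> * s"
      using A[of "s *\<^sub>R z" "\<delta> * s"] d s0 by auto
    define x where "x = (1 / s) *\<^sub>R x'"
    have "norm x \<le> c * norm z"
      using x'(1) s0 False r0 by (simp add: x_def s_def c_def field_simps)
    moreover have "T x - z = (1 / s) *\<^sub>R (T x' - s *\<^sub>R z)"
      using s0 by (simp add: x_def T.scaleR algebra_simps)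
    moreover have "norm ((1 / s) *\<^sub>R (T x' - s *\<^sub>R z)) < \<delta>"
    proof -
      have "norm ((1 / s) *\<^sub>R (T x' - s *\<^sub>R z)) = norm (T x' - s *\<^sub>R z) / s"
        using s0 by (simp del: scaleR_right_diff_distrib)
      also have "\<dots> < \<delta> * s / s" using x'(2) s0 by (rule divide_strict_right_mono)
      finally show ?thesis using s0 by simp
    qed
    ultimately show ?thesis by auto
  qed
  then show ?thesis using c0 by blast
qed

lemma open_mapping_lift:
  fixes T :: "'a::banach \<Rightarrow> 'b::banach"
  assumes T: "bounded_linear T" and surj: "surj T"
  shows "\<exists>C. \<forall>z. \<exists>x. T x = z \<and> norm x \<le> C * norm z"
proof -
  interpret T: bounded_linear T by fact
  obtain c where c0: "c > 0" and ap: "\<And>z \<delta>. \<delta> > 0 \<Longrightarrow> \<exists>x. norm x \<le> c * norm z \<and> norm (T x - z) < \<delta>"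
    using approx_step[OF T surj] by blast
  have "\<exists>x. T x = z \<and> norm x \<le> (2 * c) * norm z" for z
  proof (cases "z = 0")
    case True then show ?thesis by (intro exI[of _ 0]) simp
  next
    case False
    define \<epsilon> where "\<epsilon> = norm z"
    have e0: "\<epsilon> > 0" using False by (simp add: \<epsilon>_def)
    have "\<forall>k w. \<exists>x. norm x \<le> c * norm w \<and> norm (T x - w) < \<epsilon> / 2 ^ (Suc k)"
      using ap e0 by simp
    then obtain pick where pick: "\<And>k w. norm (pick k w) \<le> c * norm w \<and> norm (T (pick k w) - w) < \<epsilon> / 2 ^ (Suc k)"
      by metis
    define zs where "zs = rec_nat z (\<lambda>k w. w - T (pick k w))"
    have zs0: "zs 0 = z" and zsS: "\<And>k. zs (Suc k) = zs k - T (pick k (zs k))"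
      by (simp_all add: zs_def)
    have zsb: "norm (zs k) \<le> \<epsilon> / 2 ^ k" for k
    proof (cases k)
      case 0 then show ?thesis by (simp add: zs0 \<epsilon>_def)
    next
      case (Suc m)
      have "norm (zs (Suc m)) = norm (T (pick m (zs m)) - zs m)"
        by (simp add: zsS norm_minus_commute)
      also have "\<dots> < \<epsilon> / 2 ^ Suc m" using pick by blast
      finally show ?thesis using Suc by simp
    qed
    define xs where "xs k = pick k (zs k)" for k
    have xsb: "norm (xs k) \<le> (c * \<epsilon>) * (1/2) ^ k" for k
    proof -
      have "norm (xs k) \<le> c * norm (zs k)" using pick by (simp add: xs_def)
      also have "\<dots> \<le> c * (\<epsilon> / 2 ^ k)" using zsb[of k] c0 mult_left_mono[of "norm (zs k)" "\<epsilon> / 2 ^ k" c] by simp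
      finally show ?thesis by (simp add: power_one_over field_simps)
    qed
    have geo: "(\<lambda>k. (c * \<epsilon>) * (1/2) ^ k) sums ((c * \<epsilon>) * 2)"
      using sums_mult[OF geometric_sums[of "1/2::real"]] by simp
    have sn: "summable (\<lambda>k. norm (xs k))"
      by (rule summable_comparison_test[OF _ sums_summable[OF geo]]) (use xsb in auto)
    have s: "summable xs" using summable_norm_cancel[OF sn] .
    define x where "x = suminf xs"
    have "norm x \<le> (\<Sum>k. norm (xs k))" unfolding x_def by (rule summable_norm[OF sn])
    also have "\<dots> \<le> (\<Sum>k. (c * \<epsilon>) * (1/2) ^ k)"
      by (rule suminf_le[OF xsb sn sums_summable[OF geo]])
    also have "\<dots> = (2 * c) * norm z" using sums_unique[OF geo] by (simp add: \<epsilon>_def)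
    finally have xb: "norm x \<le> (2 * c) * norm z" .
    have lim: "zs \<longlonglongrightarrow> 0"
    proof (rule Lim_null_comparison)
      show "\<forall>\<^sub>F k in sequentially. norm (zs k) \<le> \<epsilon> / 2 ^ k" using zsb by simp
      show "(\<lambda>k. \<epsilon> / 2 ^ k) \<longlonglongrightarrow> 0" by (rule LIMSEQ_divide_realpow_zero) simp
    qed
    have "(\<lambda>k. zs k - zs (Suc k)) sums (zs 0 - 0)" by (rule telescope_sums'[OF lim])
    moreover have "zs k - zs (Suc k) = T (xs k)" for k by (simp add: zsS xs_def)
    ultimately have "(\<lambda>k. T (xs k)) sums z" by (simp add: zs0)
    moreover have "(\<lambda>k. T (xs k)) sums (T x)" unfolding x_def
      using T.sums[OF summable_sums[OF s]] .
    ultimately have "T x = z" using sums_unique2 by blast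
    with xb show ?thesis by blast
  qed
  then show ?thesis by blast
qed

lemma bounded_inverse:
  fixes T :: "'a::banach \<Rightarrow> 'b::banach"
  assumes T: "bounded_linear T" and surj: "surj T" and inj: "inj T"
  shows "bounded_linear (inv T)"
proof -
  interpret T: bounded_linear T by fact
  obtain C where C: "\<And>z. \<exists>x. T x = z \<and> norm x \<le> C * norm z"
    using open_mapping_lift[OF T surj] by blast
  have iT: "T (inv T z) = z" for z using surj by (simp add: surj_f_inv_f)
  have eq: "inv T z = x" if "T x = z" for z x using inj that by (simp add: inv_f_eq)
  show ?thesis
  proof (rule bounded_linear_intro[where K = C])
    show "inv T (x + y) = inv T x + inv T y" for x y
      by (rule eq) (simp add: T.add iT)
    show "inv T (r *\<^sub>R x) = r *\<^sub>R inv T x" for r x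
      by (rule eq) (simp add: T.scaleR iT)
    show "norm (inv T z) \<le> norm z * C" for z
      using C[of z] eq by (metis mult.commute)
  qed
qed


lemma hyp_iso:
  fixes Y :: "'a::banach set"
  assumes iso: "iso_to_hyperplanes TYPE('a)" and Ysub: "subspace Y" and Ycl: "closed Y" and cY: "c \<notin> Y"
  obtains \<phi> :: "'a \<Rightarrow> real" and f S0 :: "'a \<Rightarrow> 'a" where "bounded_linear \<phi>" "\<forall>y\<in>Y. \<phi> y = 0" "\<phi> c = 1"
    "bounded_linear f" "inj f" "\<forall>x. \<phi> (f x) = 0"
    "bounded_linear S0" "\<forall>x. f (S0 x) = x - \<phi> x *\<^sub>R c" "\<forall>x. S0 (f x) = x"
proof -
  obtain \<phi> :: "'a \<Rightarrow> real" where phi: "bounded_linear \<phi>" "\<forall>y\<in>Y. \<phi> y = 0" "\<phi> c = 1"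
    using hb_sep[OF Ysub Ycl cY] by blast
  interpret phi: bounded_linear \<phi> by fact
  define H where "H = {x. \<phi> x = 0}"
  have "closed_hyperplane H" unfolding closed_hyperplane_def
  proof (intro conjI)
    show "subspace H" unfolding H_def by (rule linear_subspace_kernel) (rule phi.linear)
    have "closed (\<phi> -` {0})"
      by (rule continuous_closed_vimage) (auto intro: linear_continuous_at phi)
    then show "closed H" unfolding H_def by (simp add: vimage_def)
    show "H \<noteq> UNIV"
    proof
      assume "H = UNIV" then have "c \<in> H" by simp
      then show False using phi(3) unfolding H_def by simp
    qed
    have "x \<in> span (insert c H)" for x
    proof -
      have "x - \<phi> x *\<^sub>R c \<in> H" using phi(3) by (simp add: H_def phi.diff phi.scaleR)
      then show ?thesis unfolding span_breakdown_eq by (blast intro: span_base)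
    qed
    then show "\<exists>v. span (insert v H) = UNIV" by blast
  qed
  then obtain f :: "'a \<Rightarrow> 'a" and K where f: "bounded_linear f" "inj f" "range f = H" and K: "\<And>x. norm x \<le> K * norm (f x)"
    using iso unfolding iso_to_hyperplanes_def isomorphic_to_subspace_def by blast
  interpret f: bounded_linear f by fact
  define S0 where "S0 x = inv f (x - \<phi> x *\<^sub>R c)" for x
  have fS0: "f (S0 x) = x - \<phi> x *\<^sub>R c" for x
  proof -
    have "x - \<phi> x *\<^sub>R c \<in> range f" using phi(3) f(3) by (simp add: H_def phi.diff phi.scaleR)
    then show ?thesis unfolding S0_def by (rule f_inv_into_f)
  qed
  have phif: "\<phi> (f x) = 0" for x using f(3) H_def by auto
  have S0f: "S0 (f x) = x" for x unfolding S0_def using phif f(2) by simp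
  obtain B where B: "\<And>x. norm (\<phi> x) \<le> norm x * B" using phi.bounded by blast
  have bS0: "bounded_linear S0"
  proof (rule bounded_linear_intro[where K = "\<bar>K\<bar> * (1 + \<bar>B\<bar> * norm c)"])
    show "S0 (x + y) = S0 x + S0 y" for x y
      by (rule injD[OF f(2)]) (simp add: fS0 f.add phi.add algebra_simps)
    show "S0 (r *\<^sub>R x) = r *\<^sub>R S0 x" for r x
      by (rule injD[OF f(2)]) (simp add: fS0 f.scaleR phi.scaleR algebra_simps)
    show "norm (S0 x) \<le> norm x * (\<bar>K\<bar> * (1 + \<bar>B\<bar> * norm c))" for x
    proof -
      have n1: "norm (S0 x) \<le> \<bar>K\<bar> * norm (x - \<phi> x *\<^sub>R c)"
      proof -
        have "norm (S0 x) \<le> K * norm (x - \<phi> x *\<^sub>R c)" using K[of "S0 x"] fS0[of x] by simp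
        moreover have "K * norm (x - \<phi> x *\<^sub>R c) \<le> \<bar>K\<bar> * norm (x - \<phi> x *\<^sub>R c)"
          by (rule mult_right_mono) simp_all
        ultimately show ?thesis by linarith
      qed
      have n2: "norm (x - \<phi> x *\<^sub>R c) \<le> norm x + \<bar>\<phi> x\<bar> * norm c"
        using norm_triangle_ineq4[of x "\<phi> x *\<^sub>R c"] by simp
      have "\<bar>\<phi> x\<bar> \<le> norm x * \<bar>B\<bar>"
      proof -
        have "norm x * B \<le> norm x * \<bar>B\<bar>" by (rule mult_left_mono) simp_all
        then show ?thesis using B[of x] by simp
      qed
      then have "\<bar>\<phi> x\<bar> * norm c \<le> (norm x * \<bar>B\<bar>) * norm c" by (rule mult_right_mono) simp
      with n2 have n3: "norm (x - \<phi> x *\<^sub>R c) \<le> norm x * (1 + \<bar>B\<bar> * norm c)"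
        by (simp add: distrib_left mult.assoc)
      have "\<bar>K\<bar> * norm (x - \<phi> x *\<^sub>R c) \<le> \<bar>K\<bar> * (norm x * (1 + \<bar>B\<bar> * norm c))"
        by (rule mult_left_mono[OF n3]) simp
      with n1 have "norm (S0 x) \<le> \<bar>K\<bar> * (norm x * (1 + \<bar>B\<bar> * norm c))" by (rule order.trans)
      then show ?thesis by (simp add: ac_simps)
    qed
  qed
  have A1: "\<forall>x. \<phi> (f x) = 0" using phif by blast
  have A2: "\<forall>x. f (S0 x) = x - \<phi> x *\<^sub>R c" using fS0 by blast
  have A3: "\<forall>x. S0 (f x) = x" using S0f by blast
  show ?thesis by (rule that[OF phi f(1,2) A1 bS0 A2 A3])
qed

lemma inj_case:
  fixes T :: "'a::banach \<Rightarrow> 'a"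
  assumes iso: "iso_to_hyperplanes TYPE('a)" and "finite C"
  shows "bounded_linear T \<Longrightarrow> inj T \<Longrightarrow> closed (range T) \<Longrightarrow> span (range T \<union> C) = UNIV \<Longrightarrow>
    \<exists>R S :: 'a \<Rightarrow> 'a. bounded_linear R \<and> bounded_linear S \<and> (\<forall>x. S (T (R x)) = x)"
  using assms(2)
proof (induction "card C" arbitrary: T C rule: less_induct)
  case less
  interpret T: bounded_linear T by fact
  have subR: "subspace (range T)" by (rule linear_subspace_image[OF T.linear subspace_UNIV])
  show ?case
  proof (cases "range T = UNIV")
    case True
    have "bounded_linear (inv T)" by (rule bounded_inverse[OF less.prems(1) True less.prems(2)])
    moreover have "inv T (T (id x)) = x" for x using less.prems(2) by simp
    ultimately show ?thesis using bounded_linear_ident by (metis id_apply)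
  next
    case False
    obtain c where cC: "c \<in> C" and cR: "c \<notin> range T"
    proof (rule ccontr)
      assume "\<not> thesis"
      then have "C \<subseteq> range T" using that by blast
      then have "range T \<union> C = range T" by blast
      moreover have "span (range T) = range T" using subR by simp
      ultimately have "range T = UNIV" using less.prems(4) by metis
      with False show False by simp
    qed
    obtain \<phi> :: "'a \<Rightarrow> real" and f S0 :: "'a \<Rightarrow> 'a" where phi: "bounded_linear \<phi>" "\<forall>y\<in>range T. \<phi> y = 0" "\<phi> c = 1"
      and f: "bounded_linear f" "inj f" "\<forall>x. \<phi> (f x) = 0"
      and S0: "bounded_linear S0" "\<forall>x. f (S0 x) = x - \<phi> x *\<^sub>R c" "\<forall>x. S0 (f x) = x"
      by (rule hyp_iso[OF iso subR less.prems(3) cR])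
    define T' where "T' = S0 \<circ> T"
    have fT': "f (T' x) = T x" for x using S0(2) phi(2) by (simp add: T'_def)
    have bT': "bounded_linear T'" unfolding T'_def comp_def by (rule bounded_linear_compose[OF S0(1) less.prems(1)])
    have iT': "inj T'"
    proof (rule injI)
      fix x y assume "T' x = T' y"
      then have "T x = T y" using fT' by metis
      then show "x = y" using less.prems(2) by (simp add: inj_eq)
    qed
    have rT': "range T' = f -` range T"
    proof
      show "range T' \<subseteq> f -` range T" using fT' by auto
      show "f -` range T \<subseteq> range T'"
      proof
        fix x assume "x \<in> f -` range T"
        then obtain y where "f x = T y" by auto
        then have "T' y = x" using S0(3) by (metis T'_def comp_apply)
        then show "x \<in> range T'" by blast
      qed
    qed
    have cT': "closed (range T')" unfolding rT'
      by (rule continuous_closed_vimage[OF less.prems(3)]) (rule linear_continuous_at[OF f(1)])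
    define C' where "C' = S0 ` (C - {c})"
    have fC': "finite C'" using less.prems(5) by (simp add: C'_def)
    have "card C' \<le> card (C - {c})" unfolding C'_def by (rule card_image_le) (use less.prems(5) in simp)
    also have "\<dots> < card C" using less.prems(5) cC by (rule card_Diff1_less)
    finally have cardlt: "card C' < card C" .
    have S0c: "S0 c = 0"
    proof -
      have "f (S0 c) = f 0" using S0(2) phi(3) f(1) by (simp add: linear_simps)
      then show ?thesis using f(2) by (simp add: inj_eq)
    qed
    have spT': "span (range T' \<union> C') = UNIV"
    proof -
      have "x \<in> span (range T' \<union> C')" for x
      proof -
        have "f x \<in> span (range T \<union> C)" using less.prems(4) by simp
        then have "S0 (f x) \<in> S0 ` span (range T \<union> C)" by blast
        also have "\<dots> = span (S0 ` (range T \<union> C))"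
          by (rule linear_span_image[symmetric]) (rule bounded_linear.linear[OF S0(1)])
        also have "\<dots> \<subseteq> span (insert 0 (range T' \<union> C'))"
          by (rule span_mono) (auto simp: T'_def C'_def S0c)
        finally show ?thesis using S0(3) by simp
      qed
      then show ?thesis by blast
    qed
    obtain R S :: "'a \<Rightarrow> 'a" where RS: "bounded_linear R" "bounded_linear S" "\<forall>x. S (T' (R x)) = x"
      using less.hyps[OF cardlt bT' iT' cT' spT' fC'] by blast
    have "bounded_linear (S \<circ> S0)" unfolding comp_def by (rule bounded_linear_compose[OF RS(2) S0(1)])
    moreover have "(S \<circ> S0) (T (R x)) = x" for x using RS(3) by (simp add: T'_def)
    ultimately show ?thesis using RS(1) by blast
  qed
qed

lemma ker_case:
  fixes T :: "'a::banach \<Rightarrow> 'a"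
  assumes iso: "iso_to_hyperplanes TYPE('a)" and "finite B"
  shows "bounded_linear T \<Longrightarrow> span B = {x. T x = 0} \<Longrightarrow> closed (range T) \<Longrightarrow> finite C \<Longrightarrow>
    span (range T \<union> C) = UNIV \<Longrightarrow>
    \<exists>R S :: 'a \<Rightarrow> 'a. bounded_linear R \<and> bounded_linear S \<and> (\<forall>x. S (T (R x)) = x)"
  using assms(2)
proof (induction "card B" arbitrary: T B rule: less_induct)
  case less
  interpret T: bounded_linear T by fact
  show ?case
  proof (cases "\<forall>b\<in>B. b = 0")
    case True
    then have "B \<subseteq> {0}" by blast
    then have "span B \<subseteq> {0}" using span_mono[of B "{0}"] by simp
    then have "inj T" using less.prems(2) linear_inj_iff_eq_0[OF T.linear] by blast
    then show ?thesis using inj_case[OF iso less.prems(4) less.prems(1) _ less.prems(3) less.prems(5)] by blast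
  next
    case False
    then obtain v where vB: "v \<in> B" and v0: "v \<noteq> 0" by blast
    have Tv: "T v = 0" using less.prems(2) span_base[OF vB] by blast
    have vn: "v \<notin> {0}" using v0 by simp
    obtain \<phi> :: "'a \<Rightarrow> real" and f S0 :: "'a \<Rightarrow> 'a" where phi: "bounded_linear \<phi>" "\<forall>y\<in>{0}. \<phi> y = 0" "\<phi> v = 1"
      and f: "bounded_linear f" "inj f" "\<forall>x. \<phi> (f x) = 0"
      and S0: "bounded_linear S0" "\<forall>x. f (S0 x) = x - \<phi> x *\<^sub>R v" "\<forall>x. S0 (f x) = x"
      by (rule hyp_iso[OF iso subspace_single_0 closed_singleton vn])
    define T' where "T' = T \<circ> f"
    have bT': "bounded_linear T'" unfolding T'_def comp_def by (rule bounded_linear_compose[OF less.prems(1) f(1)])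
    have TfS0: "T (f (S0 x)) = T x" for x using S0(2) Tv by (simp add: T.diff T.scaleR)
    have rT': "range T' = range T"
    proof
      show "range T' \<subseteq> range T" by (auto simp: T'_def)
      show "range T \<subseteq> range T'" using TfS0 by (metis T'_def comp_apply image_subset_iff rangeI)
    qed
    define B' where "B' = S0 ` (B - {v})"
    have fB': "finite B'" using less.prems(6) by (simp add: B'_def)
    have "card B' \<le> card (B - {v})" unfolding B'_def by (rule card_image_le) (use less.prems(6) in simp)
    also have "\<dots> < card B" using less.prems(6) vB by (rule card_Diff1_less)
    finally have cardlt: "card B' < card B" .
    have S0v: "S0 v = 0"
    proof -
      have "f (S0 v) = f 0" using S0(2) phi(3) f(1) by (simp add: linear_simps)
      then show ?thesis using f(2) by (simp add: inj_eq)
    qed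
    have kerT': "span B' = {x. T' x = 0}"
    proof
      have sk: "subspace {x. T' x = 0}" by (rule linear_subspace_kernel) (rule bounded_linear.linear[OF bT'])
      show "span B' \<subseteq> {x. T' x = 0}"
      proof (rule span_minimal[OF _ sk])
        show "B' \<subseteq> {x. T' x = 0}"
        proof
          fix y assume "y \<in> B'"
          then obtain b where b: "b \<in> B" "y = S0 b" unfolding B'_def by blast
          have "T b = 0" using less.prems(2) span_base[OF b(1)] by blast
          then show "y \<in> {x. T' x = 0}" using TfS0[of b] b(2) by (simp add: T'_def)
        qed
      qed
      show "{x. T' x = 0} \<subseteq> span B'"
      proof
        fix x assume "x \<in> {x. T' x = 0}"
        then have "f x \<in> span B" using less.prems(2) by (simp add: T'_def)
        then have "S0 (f x) \<in> S0 ` span B" by blast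
        also have "\<dots> = span (S0 ` B)"
          by (rule linear_span_image[symmetric]) (rule bounded_linear.linear[OF S0(1)])
        also have "\<dots> \<subseteq> span (insert 0 B')"
          by (rule span_mono) (auto simp: B'_def S0v)
        finally show "x \<in> span B'" using S0(3) by simp
      qed
    qed
    obtain R S :: "'a \<Rightarrow> 'a" where RS: "bounded_linear R" "bounded_linear S" "\<forall>x. S (T' (R x)) = x"
      using less.hyps[OF cardlt bT' kerT' _ less.prems(4) _ fB'] less.prems(3,5) rT' by metis
    have "bounded_linear (f \<circ> R)" unfolding comp_def by (rule bounded_linear_compose[OF f(1) RS(1)])
    moreover have "S (T ((f \<circ> R) x)) = x" for x using RS(3) by (simp add: T'_def)
    ultimately show ?thesis using RS(2) by blast
  qed
qed

theorem lemma3p1: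
  fixes T :: "'a::banach \<Rightarrow> 'a"
  assumes "iso_to_hyperplanes TYPE('a)"
    and "fredholm T"
  shows "\<exists>R S :: 'a \<Rightarrow> 'a. bounded_linear R \<and> bounded_linear S \<and> (\<forall>x. S (T (R x)) = x)"
proof -
  obtain B C where "bounded_linear T" "finite B" "span B = {x. T x = 0}" "closed (range T)"
    "finite C" "span (range T \<union> C) = UNIV"
    using assms(2) unfolding fredholm_def by blast
  then show ?thesis using ker_case[OF assms(1)] by blast
qed

end
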